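(* Let $T$ be a rooted binary tree with black/white-coloured leaves and the induced node colouring and classification as described in the context, and suppose $T$ contains more than one maximal black subtree. Then no SPR operation on $T$ belonging to the class $(\mathrm{B},\mathrm{b},\mathrm{W},\ast)$, $(\mathrm{B},\mathrm{b},\mathrm{B},\ast)$ or $(\mathrm{B},\mathrm{b},\mathrm{G},\ast)$ produces a compatible tree.
   Context: All trees are rooted binary trees; every non-leaf node has exactly two children and every non-root node $n$ has a parent $\mathrm{pa}(n)$. A "subtree" always means a node together with all of its descendants. Colouring: each leaf is coloured black (B) or white (W); an internal node is black if both children are black, white if both children are white, and grey (G) otherwise. A subtree is black (resp. white) if all its nodes are black (resp. white); it is maximal if no strictly larger subtree containing it is black (resp. white). Classification: a black or white node is of type "r" if it is the root of a maximal subtree of its own colour, and of type "b" otherwise; all grey nodes are of type "b" by convention. A tree is compatible if it contains at most one maximal black subtree. SPR operation $(u,v)$ on $T$: $u$ is a non-root node, $v$ is a node with $v\notin\{u,\mathrm{pa}(u)\}$ and $v$ not a descendant of $u$; the subtree rooted at $u$ is pruned (the edge to $u$ is removed and $\mathrm{pa}(u)$ deleted, its other child taking its place), then regrafted by inserting a new node on the edge from $v$ to its parent (or as a new root above $v$ if $v$ is the root) whose two children are $v$ and $u$; colours of the resulting tree are recomputed by the same rule. The operation belongs to class $(x,y,z,w)$ where $x,z\in\{\mathrm{B},\mathrm{W},\mathrm{G}\}$ are the colours in $T$ of $u$ and $v$, and $y,w\in\{\mathrm{r},\mathrm{b}\}$ their classifications in $T$; $\ast$ denotes any value. *)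

theory Defs
  imports Main "HOL-Library.Sublist"
begin

(* Rooted binary trees; a leaf carries its colour (True = black, False = white). *)
datatype tree = Leaf bool | Node tree tree

datatype colour = Bk | Wh | Gr

(* Classification: R = type "r", Bt = type "b" *)
datatype kind = R | Bt

(* Nodes are addressed by paths from the root: False = left child, True = right child. *)
fun positions :: "tree \<Rightarrow> bool list set" where
  "positions (Leaf _) = {[]}"
| "positions (Node l r) = insert [] (Cons False ` positions l \<union> Cons True ` positions r)"

fun subtree :: "tree \<Rightarrow> bool list \<Rightarrow> tree" where
  "subtree t [] = t"
| "subtree (Node l r) (d # p) = subtree (if d then r else l) p"
| "subtree (Leaf b) (_ # _) = Leaf b"

fun replace :: "tree \<Rightarrow> bool list \<Rightarrow> tree \<Rightarrow> tree" where
  "replace t [] s = s"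
| "replace (Node l r) (d # p) s =
     (if d then Node l (replace r p s) else Node (replace l p s) r)"
| "replace (Leaf b) (_ # _) s = Leaf b"

fun tcolour :: "tree \<Rightarrow> colour" where
  "tcolour (Leaf b) = (if b then Bk else Wh)"
| "tcolour (Node l r) =
     (if tcolour l = Bk \<and> tcolour r = Bk then Bk
      else if tcolour l = Wh \<and> tcolour r = Wh then Wh else Gr)"

definition node_colour :: "tree \<Rightarrow> bool list \<Rightarrow> colour" where
  "node_colour t p = tcolour (subtree t p)"

definition mono_subtree :: "tree \<Rightarrow> bool list \<Rightarrow> colour \<Rightarrow> bool" where
  "mono_subtree t p c \<longleftrightarrow> p \<in> positions t \<and>
     (\<forall>q. p @ q \<in> positions t \<longrightarrow> node_colour t (p @ q) = c)"

definition maximal_subtree :: "tree \<Rightarrow> bool list \<Rightarrow> colour \<Rightarrow> bool" where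
  "maximal_subtree t p c \<longleftrightarrow> mono_subtree t p c \<and>
     (\<forall>q. strict_prefix q p \<longrightarrow> \<not> mono_subtree t q c)"

definition max_black_roots :: "tree \<Rightarrow> bool list set" where
  "max_black_roots t = {p. maximal_subtree t p Bk}"

definition compatible :: "tree \<Rightarrow> bool" where
  "compatible t \<longleftrightarrow> card (max_black_roots t) \<le> 1"

definition node_kind :: "tree \<Rightarrow> bool list \<Rightarrow> kind" where
  "node_kind t p =
     (if node_colour t p \<in> {Bk, Wh} \<and> maximal_subtree t p (node_colour t p) then R else Bt)"

(* validity of the SPR operation (u,v): u non-root, v not u, not pa(u),
   not a descendant of u; pa(u) = butlast u *)
definition is_spr :: "tree \<Rightarrow> bool list \<Rightarrow> bool list \<Rightarrow> bool" where
  "is_spr t u v \<longleftrightarrow> u \<in> positions t \<and> u \<noteq> [] \<and> v \<in> positions t \<and>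
     v \<noteq> u \<and> v \<noteq> butlast u \<and> \<not> prefix u v"

(* The SPR operation: prune the subtree at u (pa(u) is replaced by the sibling of u),
   then regraft above the (relocated) node v. *)
definition spr :: "tree \<Rightarrow> bool list \<Rightarrow> bool list \<Rightarrow> tree" where
  "spr t u v =
    (let pu = butlast u; sib = pu @ [\<not> last u];
         t' = replace t pu (subtree t sib);
         v' = (if prefix sib v then pu @ drop (length sib) v else v)
     in replace t' v' (Node (subtree t' v') (subtree t u)))"

definition spr_class :: "tree \<Rightarrow> bool list \<Rightarrow> bool list \<Rightarrow> colour \<times> kind \<times> colour \<times> kind" where
  "spr_class t u v = (node_colour t u, node_kind t u, node_colour t v, node_kind t v)"

end

theory Submission
  imports Defs
begin

fun mb :: "tree \<Rightarrow> nat" where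
  "mb (Leaf b) = (if b then 1 else 0)"
| "mb (Node l r) = (if tcolour (Node l r) = Bk then 1 else mb l + mb r)"

lemma tcolour_Node_Bk: "tcolour (Node l r) = Bk \<longleftrightarrow> tcolour l = Bk \<and> tcolour r = Bk"
  by simp

lemma mb_Bk: "tcolour t = Bk \<Longrightarrow> mb t = 1"
  by (cases t) (auto split: if_splits)

lemma Nil_pos[simp]: "[] \<in> positions t"
  by (cases t) auto

lemma subtree_append: "subtree t (p @ q) = subtree (subtree t p) q"
proof (induction p arbitrary: t)
  case Nil then show ?case by simp
next
  case (Cons d p) then show ?case
    by (cases t) (auto, metis subtree.simps(1) subtree.simps(3) neq_Nil_conv)
qed

lemma subtree_Leaf: "subtree (Leaf b) q = Leaf b"
  by (cases q) auto

lemma positions_append: "p @ q \<in> positions t \<longleftrightarrow> p \<in> positions t \<and> q \<in> positions (subtree t p)"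
proof (induction p arbitrary: t)
  case Nil then show ?case by simp
next
  case (Cons d p) then show ?case
    by (cases t) auto
qed

lemma finite_positions: "finite (positions t)"
  by (induction t) auto

lemma black_all: "tcolour s = Bk \<Longrightarrow> q \<in> positions s \<Longrightarrow> tcolour (subtree s q) = Bk"
proof (induction s arbitrary: q)
  case (Leaf b) then show ?case by auto
next
  case (Node l r) then show ?case
    by (auto split: if_splits)
qed

definition blk :: "tree \<Rightarrow> bool list \<Rightarrow> bool" where
  "blk t p \<longleftrightarrow> p \<in> positions t \<and> tcolour (subtree t p) = Bk"

lemma mono_blk: "mono_subtree t p Bk \<longleftrightarrow> blk t p"
  unfolding mono_subtree_def blk_def node_colour_def
  by (metis append_Nil2 black_all positions_append subtree_append positions.simps(1)
      insertI1 subtree.simps(1))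

lemma maximal_blk: "maximal_subtree t p Bk \<longleftrightarrow> blk t p \<and> (\<forall>q. strict_prefix q p \<longrightarrow> \<not> blk t q)"
  unfolding maximal_subtree_def mono_blk by simp

lemma blk_Leaf: "blk (Leaf b) p \<longleftrightarrow> p = [] \<and> b"
  unfolding blk_def by (auto split: if_splits)

lemma blk_Node_Nil: "blk (Node l r) [] \<longleftrightarrow> tcolour (Node l r) = Bk"
  unfolding blk_def by auto

lemma blk_Node_Cons: "blk (Node l r) (d # p) \<longleftrightarrow> blk (if d then r else l) p"
  unfolding blk_def by auto

lemma strict_prefix_Cons_iff:
  "strict_prefix q (d # p) \<longleftrightarrow> q = [] \<or> (\<exists>q'. q = d # q' \<and> strict_prefix q' p)"
  by (cases q) auto

lemma mbr_Leaf: "max_black_roots (Leaf b) = (if b then {[]} else {})"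
  unfolding max_black_roots_def maximal_blk blk_Leaf by auto

lemma mbr_Node: "max_black_roots (Node l r) =
   (if tcolour (Node l r) = Bk then {[]} else Cons False ` max_black_roots l \<union> Cons True ` max_black_roots r)"
proof -
  have A: "p \<in> max_black_roots (Node l r) \<longleftrightarrow>
     p \<in> (if tcolour (Node l r) = Bk then {[]} else Cons False ` max_black_roots l \<union> Cons True ` max_black_roots r)" for p
  proof (cases p)
    case Nil then show ?thesis
      unfolding max_black_roots_def maximal_blk by (auto simp: blk_Node_Nil simp del: tcolour.simps)
  next
    case (Cons d p')
    have "p \<in> max_black_roots (Node l r) \<longleftrightarrow> tcolour (Node l r) \<noteq> Bk \<and> p' \<in> max_black_roots (if d then r else l)"
    proof -
      have e1: "p \<in> max_black_roots (Node l r) \<longleftrightarrow> blk (Node l r) (d#p') \<and> (\<forall>q. strict_prefix q (d#p') \<longrightarrow> \<not> blk (Node l r) q)"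
        unfolding max_black_roots_def maximal_blk Cons by simp
      have e2: "(\<forall>q. strict_prefix q (d#p') \<longrightarrow> \<not> blk (Node l r) q) \<longleftrightarrow>
          \<not> blk (Node l r) [] \<and> (\<forall>q'. strict_prefix q' p' \<longrightarrow> \<not> blk (Node l r) (d#q'))"
        unfolding strict_prefix_Cons_iff by blast
      show ?thesis unfolding e1 e2
        unfolding blk_Node_Cons blk_Node_Nil
        unfolding max_black_roots_def maximal_blk mem_Collect_eq by (simp del: tcolour.simps) blast
    qed
    then show ?thesis using Cons by (cases d) auto
  qed
  then show ?thesis by blast
qed

lemma mbr_sub: "max_black_roots t \<subseteq> positions t"
  unfolding max_black_roots_def maximal_blk blk_def by auto

lemma card_mbr: "card (max_black_roots t) = mb t"
proof (induction t)
  case (Leaf b) then show ?case by (simp add: mbr_Leaf)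
next
  case (Node l r)
  show ?case
  proof (cases "tcolour (Node l r) = Bk")
    case True then show ?thesis by (simp only: mbr_Node mb.simps if_True) simp
  next
    case False
    have fl: "finite (max_black_roots l)" "finite (max_black_roots r)"
      using mbr_sub finite_positions finite_subset by blast+
    have "card (Cons False ` max_black_roots l \<union> Cons True ` max_black_roots r)
        = card (Cons False ` max_black_roots l) + card (Cons True ` max_black_roots r)"
      by (rule card_Un_disjoint) (use fl in auto)
    also have "\<dots> = mb l + mb r"
      using Node by (simp add: card_image)
    finally show ?thesis using False by (simp only: mbr_Node mb.simps if_False)
  qed
qed

lemma mb_replace:
  "p \<in> positions t \<Longrightarrow> (tcolour s = Bk \<longleftrightarrow> tcolour (subtree t p) = Bk) \<Longrightarrow>
   mb (replace t p s) + mb (subtree t p) = mb t + mb s \<and> (tcolour (replace t p s) = Bk \<longleftrightarrow> tcolour t = Bk)"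
proof (induction t arbitrary: p)
  case (Leaf b) then show ?case by auto
next
  case (Node l r)
  show ?case
  proof (cases p)
    case Nil then show ?thesis using Node.prems by auto
  next
    case (Cons d p')
    show ?thesis
    proof (cases d)
      case True
      have h: "p' \<in> positions r" "(tcolour s = Bk \<longleftrightarrow> tcolour (subtree r p') = Bk)"
        using Node.prems Cons True by auto
      from Node.IH(2)[OF this] show ?thesis using Cons True black_all[OF _ h(1)] h(2) mb_Bk[of s] mb_Bk[of "subtree r p'"]
        by (simp only: replace.simps if_True subtree.simps mb.simps tcolour_Node_Bk) auto
    next
      case False
      have h: "p' \<in> positions l" "(tcolour s = Bk \<longleftrightarrow> tcolour (subtree l p') = Bk)"
        using Node.prems Cons False by auto
      from Node.IH(1)[OF this] show ?thesis using Cons False black_all[OF _ h(1)] h(2) mb_Bk[of s] mb_Bk[of "subtree l p'"]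
        by (simp only: replace.simps if_False subtree.simps mb.simps tcolour_Node_Bk) auto
    qed
  qed
qed

lemma positions_replace:
  "p \<in> positions t \<Longrightarrow> q \<in> positions (replace t p s) \<longleftrightarrow>
     (q \<in> positions t \<and> \<not> prefix p q) \<or> (\<exists>w. q = p @ w \<and> w \<in> positions s)"
proof (induction t arbitrary: p q)
  case (Leaf b) then show ?case by auto
next
  case (Node l r)
  show ?case
  proof (cases p)
    case Nil then show ?thesis by simp
  next
    case (Cons d p')
    show ?thesis
    proof (cases q)
      case Nil then show ?thesis using Cons by (cases d) auto
    next
      case (Cons e q')
      show ?thesis using Node \<open>p = d # p'\<close> Cons by (cases d; cases e) auto
    qed
  qed
qed

lemma Node_at: "p @ [x] \<in> positions t \<Longrightarrow> \<exists>a b. subtree t p = Node a b"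
  by (metis positions_append positions.simps(1) singletonD tree.exhaust list.distinct(1))

theorem lemma2:
  fixes T :: tree and u v :: "bool list"
  assumes "card (max_black_roots T) > 1"
    and "is_spr T u v"
    and "spr_class T u v \<in> {(Bk, Bt, Wh, y) | y. True} \<union> {(Bk, Bt, Bk, y) | y. True}
                            \<union> {(Bk, Bt, Gr, y) | y. True}"
  shows "\<not> compatible (spr T u v)"
proof -
  have ucol: "node_colour T u = Bk" and ukind: "node_kind T u = Bt"
    using assms(3) unfolding spr_class_def by auto
  have upos: "u \<in> positions T" and une: "u \<noteq> []" and vpos: "v \<in> positions T"
    and vu: "v \<noteq> u" and vpu: "v \<noteq> butlast u" and npre: "\<not> prefix u v"
    using assms(2) unfolding is_spr_def by auto
  define pu where "pu = butlast u"
  define x where "x = last u"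
  define sib where "sib = pu @ [\<not> x]"
  have u_eq: "u = pu @ [x]" using une unfolding pu_def x_def by simp
  have "blk T u" using upos ucol unfolding blk_def node_colour_def by simp
  then have "\<not> (\<forall>q. strict_prefix q u \<longrightarrow> \<not> blk T q)"
    using ukind ucol \<open>blk T u\<close> unfolding node_kind_def by (auto simp: maximal_blk split: if_splits)
  then obtain q where q: "strict_prefix q u" "blk T q" by blast
  have "prefix q pu" using q(1) u_eq
    by (metis prefix_snoc strict_prefix_def)
  then obtain r where r: "pu = q @ r" by (auto simp: prefix_def)
  have pupos: "pu \<in> positions T" using upos u_eq positions_append by blast
  have "tcolour (subtree T pu) = Bk"
    using q(2) pupos r black_all positions_append subtree_append unfolding blk_def by metis
  moreover obtain a b where ab: "subtree T pu = Node a b" using Node_at upos u_eq by blast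
  ultimately have abB: "tcolour a = Bk" "tcolour b = Bk" by (auto split: if_splits)
  have subsib: "subtree T sib = (if \<not> x then b else a)" unfolding sib_def
    by (simp add: subtree_append ab)
  have subu: "subtree T u = (if x then b else a)" unfolding u_eq
    by (simp add: subtree_append ab)
  have sibB: "tcolour (subtree T sib) = Bk" and uB: "tcolour (subtree T u) = Bk"
    using subsib subu abB by auto
  define t' where "t' = replace T pu (subtree T sib)"
  have "mb t' + mb (subtree T pu) = mb T + mb (subtree T sib)"
    using mb_replace[OF pupos, of "subtree T sib"] sibB \<open>tcolour (subtree T pu) = Bk\<close>
    unfolding t'_def by auto
  then have mbt': "mb t' = mb T"
    using mb_Bk sibB \<open>tcolour (subtree T pu) = Bk\<close> by simp
  define v' where "v' = (if prefix sib v then pu @ drop (length sib) v else v)"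
  have sibpos: "sib \<in> positions T" using ab pupos positions_append unfolding sib_def by auto
  have v'pos: "v' \<in> positions t'"
  proof (cases "prefix sib v")
    case True
    then obtain w where w: "v = sib @ w" by (auto simp: prefix_def)
    have "w \<in> positions (subtree T sib)" using vpos w positions_append by blast
    moreover have "v' = pu @ w" using True w unfolding v'_def by simp
    ultimately show ?thesis unfolding t'_def using positions_replace[OF pupos] by blast
  next
    case False
    have "\<not> prefix pu v"
    proof
      assume "prefix pu v"
      then obtain w where w: "v = pu @ w" by (auto simp: prefix_def)
      then obtain e w' where "w = e # w'" using vpu unfolding pu_def by (cases w) auto
      then show False using w False npre u_eq unfolding sib_def
        by (cases "e = x") auto
    qed
    then show ?thesis using False vpos positions_replace[OF pupos] unfolding t'_def v'_def by auto
  qed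
  define S where "S = Node (subtree t' v') (subtree T u)"
  have "spr T u v = replace t' v' S"
    unfolding spr_def S_def t'_def v'_def sib_def pu_def x_def Let_def by simp
  moreover have "mb (replace t' v' S) \<ge> mb t'"
  proof (cases "tcolour (subtree t' v') = Bk")
    case True
    then have "tcolour S = Bk" using uB unfolding S_def by simp
    then show ?thesis using mb_replace[OF v'pos, of S] True mb_Bk by auto
  next
    case False
    then have "tcolour S \<noteq> Bk" unfolding S_def by simp
    then have "mb S = mb (subtree t' v') + mb (subtree T u)"
      unfolding S_def by (simp del: tcolour.simps)
    then show ?thesis using mb_replace[OF v'pos, of S] False \<open>tcolour S \<noteq> Bk\<close> by auto
  qed
  ultimately have "mb (spr T u v) > 1" using mbt' assms(1) card_mbr by simp
  then show ?thesis unfolding compatible_def card_mbr by simp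
qed

end
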